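(* Let $w$ be a non-degenerate 4-web on an open subset of $\mathbb{R}^3$ formed by three foliations by surfaces and one foliation by curves. Then the rank of $w$ is at most $2$.
   Context: For a web $w$ formed by foliations $\mathcal{F}_1,\dots,\mathcal{F}_d$ (leaves may have different dimensions), an abelian relation is a $d$-tuple of 1-forms $(\sigma_1,\dots,\sigma_d)$ such that each $\sigma_i$ vanishes on the leaves of $\mathcal{F}_i$, each $\sigma_i$ is closed, and $\sigma_1+\dots+\sigma_d=0$; the rank of $w$ is the dimension of the real vector space of abelian relations. Non-degenerate means: the tangent planes of the three surface foliations are in general position at each point (their conormal covectors form a basis of the cotangent space), and the tangent line of the curve foliation is, at each point, not contained in the tangent plane of any of the three surface foliations. The statement is local. *)

theory Defs
  imports "HOL-Analysis.Analysis" "HOL-Library.Extended_Nat"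
begin

text \<open>We work in coordinates on an open subset of real^3.
  A 1-form (and also a covector field) on a set is a map real^3 to real^3,
  the value at x being the coefficient vector (a1,a2,a3) of a1 dx1 + a2 dx2 + a3 dx3;
  pairing with tangent vectors is the inner product.\<close>

definition pdiff :: "3 \<Rightarrow> (real^3 \<Rightarrow> real^3) \<Rightarrow> real^3 \<Rightarrow> real^3" where
  "pdiff j f x = vector_derivative (\<lambda>t. f (x + t *\<^sub>R axis j 1)) (at 0)"

fun iter_pd :: "3 list \<Rightarrow> (real^3 \<Rightarrow> real^3) \<Rightarrow> real^3 \<Rightarrow> real^3" where
  "iter_pd [] f = f"
| "iter_pd (j # js) f = pdiff j (iter_pd js f)"

definition smooth_on :: "(real^3) set \<Rightarrow> (real^3 \<Rightarrow> real^3) \<Rightarrow> bool" where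
  "smooth_on U f \<longleftrightarrow>
     (\<forall>js. continuous_on U (iter_pd js f) \<and>
        (\<forall>j. \<forall>x\<in>U. (\<lambda>t. iter_pd js f (x + t *\<^sub>R axis j 1)) differentiable (at 0)))"

definition closed_form :: "(real^3) set \<Rightarrow> (real^3 \<Rightarrow> real^3) \<Rightarrow> bool" where
  "closed_form U \<sigma> \<longleftrightarrow> (\<forall>x\<in>U. \<forall>j k. pdiff j \<sigma> x $ k = pdiff k \<sigma> x $ j)"

text \<open>A (smooth, codimension one) foliation by surfaces, given by a smooth nowhere
  vanishing conormal field nu satisfying the Frobenius integrability condition
  nu /\ d nu = 0; the tangent plane of the leaf through x is the kernel of nu x.\<close>
definition surface_foliation :: "(real^3) set \<Rightarrow> (real^3 \<Rightarrow> real^3) \<Rightarrow> bool" where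
  "surface_foliation U \<nu> \<longleftrightarrow> smooth_on U \<nu> \<and> (\<forall>x\<in>U. \<nu> x \<noteq> 0) \<and>
     (\<forall>x\<in>U. \<nu> x $ 1 * (pdiff 2 \<nu> x $ 3 - pdiff 3 \<nu> x $ 2)
            + \<nu> x $ 2 * (pdiff 3 \<nu> x $ 1 - pdiff 1 \<nu> x $ 3)
            + \<nu> x $ 3 * (pdiff 1 \<nu> x $ 2 - pdiff 2 \<nu> x $ 1) = 0)"

text \<open>A (smooth) foliation by curves, given by a smooth nowhere vanishing tangent
  vector field v; the tangent line of the leaf through x is spanned by v x.\<close>
definition curve_foliation :: "(real^3) set \<Rightarrow> (real^3 \<Rightarrow> real^3) \<Rightarrow> bool" where
  "curve_foliation U v \<longleftrightarrow> smooth_on U v \<and> (\<forall>x\<in>U. v x \<noteq> 0)"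

definition nondegenerate_web ::
  "(real^3) set \<Rightarrow> (real^3 \<Rightarrow> real^3) \<Rightarrow> (real^3 \<Rightarrow> real^3) \<Rightarrow> (real^3 \<Rightarrow> real^3)
     \<Rightarrow> (real^3 \<Rightarrow> real^3) \<Rightarrow> bool" where
  "nondegenerate_web U \<nu>1 \<nu>2 \<nu>3 v \<longleftrightarrow>
     (\<forall>x\<in>U. det (vector [\<nu>1 x, \<nu>2 x, \<nu>3 x] :: real^3^3) \<noteq> 0 \<and>
             \<nu>1 x \<bullet> v x \<noteq> 0 \<and> \<nu>2 x \<bullet> v x \<noteq> 0 \<and> \<nu>3 x \<bullet> v x \<noteq> 0)"

definition abelian_relation ::
  "(real^3) set \<Rightarrow> (real^3 \<Rightarrow> real^3) \<Rightarrow> (real^3 \<Rightarrow> real^3) \<Rightarrow> (real^3 \<Rightarrow> real^3)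
     \<Rightarrow> (real^3 \<Rightarrow> real^3) \<Rightarrow> (nat \<Rightarrow> real^3 \<Rightarrow> real^3) \<Rightarrow> bool" where
  "abelian_relation V \<nu>1 \<nu>2 \<nu>3 v \<sigma> \<longleftrightarrow>
     (\<forall>i<4. smooth_on V (\<sigma> i) \<and> closed_form V (\<sigma> i)) \<and>
     (\<forall>x\<in>V. \<forall>t. \<nu>1 x \<bullet> t = 0 \<longrightarrow> \<sigma> 0 x \<bullet> t = 0) \<and>
     (\<forall>x\<in>V. \<forall>t. \<nu>2 x \<bullet> t = 0 \<longrightarrow> \<sigma> 1 x \<bullet> t = 0) \<and>
     (\<forall>x\<in>V. \<forall>t. \<nu>3 x \<bullet> t = 0 \<longrightarrow> \<sigma> 2 x \<bullet> t = 0) \<and>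
     (\<forall>x\<in>V. \<sigma> 3 x \<bullet> v x = 0) \<and>
     (\<forall>x\<in>V. \<sigma> 0 x + \<sigma> 1 x + \<sigma> 2 x + \<sigma> 3 x = 0)"

definition forms_lin_indep ::
  "(real^3) set \<Rightarrow> nat \<Rightarrow> (nat \<Rightarrow> nat \<Rightarrow> real^3 \<Rightarrow> real^3) \<Rightarrow> bool" where
  "forms_lin_indep V k \<rho> \<longleftrightarrow>
     (\<forall>c::nat \<Rightarrow> real. (\<forall>i<4. \<forall>x\<in>V. (\<Sum>j<k. c j *\<^sub>R \<rho> j i x) = 0) \<longrightarrow> (\<forall>j<k. c j = 0))"

text \<open>The rank: dimension of the real vector space of abelian relations on V
  (as an extended natural number; infinity if infinite dimensional).\<close>
definition web_rank ::
  "(real^3) set \<Rightarrow> (real^3 \<Rightarrow> real^3) \<Rightarrow> (real^3 \<Rightarrow> real^3) \<Rightarrow> (real^3 \<Rightarrow> real^3)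
     \<Rightarrow> (real^3 \<Rightarrow> real^3) \<Rightarrow> enat" where
  "web_rank V \<nu>1 \<nu>2 \<nu>3 v =
     Sup {enat k | k. \<exists>\<rho>. (\<forall>j<k. abelian_relation V \<nu>1 \<nu>2 \<nu>3 v (\<rho> j)) \<and> forms_lin_indep V k \<rho>}"

end

theory Submission
  imports Defs
begin

unbundle cross3_syntax

definition kA :: "real^3 \<Rightarrow> real^3 \<Rightarrow> real^3 \<Rightarrow> real^3 \<Rightarrow> real^3 \<Rightarrow> real \<Rightarrow> real" where
  "kA n1 n2 n3 c1 A1 a1 = (((n1 \<times> c1) \<bullet> (n2 \<times> n3)) / (n1 \<bullet> n1) - (A1 \<bullet> (n2 \<times> n3)) / a1) / (n1 \<bullet> (n2 \<times> n3))"

definition kB :: "real^3 \<Rightarrow> real^3 \<Rightarrow> real^3 \<Rightarrow> real^3 \<Rightarrow> real^3 \<Rightarrow> real^3 \<Rightarrow> real \<Rightarrow> real \<Rightarrow> real" where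
  "kB n1 n2 n3 nm cm Am a1 am = - ((Am \<bullet> (n2 \<times> n3)) - am * ((nm \<times> cm) \<bullet> (n2 \<times> n3)) / (nm \<bullet> nm)) / (a1 * (n1 \<bullet> (n2 \<times> n3)))"

lemma alg:
  fixes n1 n2 n3 c1 c2 c3 G1 G2 G3 A1 A2 A3 :: "real^3" and f1 f2 f3 a1 a2 a3 :: real
  assumes h1: "G1 \<times> n1 = - f1 *\<^sub>R c1" and h2: "G2 \<times> n2 = - f2 *\<^sub>R c2" and h3: "G3 \<times> n3 = - f3 *\<^sub>R c3"
    and hs: "a1 *\<^sub>R G1 + a2 *\<^sub>R G2 + a3 *\<^sub>R G3 + f1 *\<^sub>R A1 + f2 *\<^sub>R A2 + f3 *\<^sub>R A3 = 0"
    and n1: "n1 \<noteq> 0" and n2: "n2 \<noteq> 0" and n3: "n3 \<noteq> 0" and a1: "a1 \<noteq> 0"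
    and D: "n1 \<bullet> (n2 \<times> n3) \<noteq> 0"
  shows "G1 = (- (f1 / (n1 \<bullet> n1))) *\<^sub>R (n1 \<times> c1)
     + (f1 * kA n1 n2 n3 c1 A1 a1 + f2 * kB n1 n2 n3 n2 c2 A2 a1 a2 + f3 * kB n1 n2 n3 n3 c3 A3 a1 a3) *\<^sub>R n1"
proof -
  define w where "w = n2 \<times> n3"
  define D where "D = n1 \<bullet> w"
  have Dnz: "D \<noteq> 0" using D by (simp add: D_def w_def)
  have key: "\<And>n G c f. G \<times> n = - f *\<^sub>R c \<Longrightarrow> (n \<bullet> n) *\<^sub>R G = (n \<bullet> G) *\<^sub>R n - f *\<^sub>R (n \<times> c)"
  proof -
    fix n G c :: "real^3" and f :: real
    assume "G \<times> n = - f *\<^sub>R c"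
    then have "n \<times> (G \<times> n) = - f *\<^sub>R (n \<times> c)" by (simp add: cross_mult_right)
    then show "(n \<bullet> n) *\<^sub>R G = (n \<bullet> G) *\<^sub>R n - f *\<^sub>R (n \<times> c)"
      by (simp add: Lagrange algebra_simps)
  qed
  have N1: "n1 \<bullet> n1 \<noteq> 0" "n2 \<bullet> n2 \<noteq> 0" "n3 \<bullet> n3 \<noteq> 0" using n1 n2 n3 by auto
  have e1: "(n1 \<bullet> n1) *\<^sub>R G1 = (n1 \<bullet> G1) *\<^sub>R n1 - f1 *\<^sub>R (n1 \<times> c1)" by (rule key[OF h1])
  have e2: "(n2 \<bullet> n2) *\<^sub>R G2 = (n2 \<bullet> G2) *\<^sub>R n2 - f2 *\<^sub>R (n2 \<times> c2)" by (rule key[OF h2])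
  have e3: "(n3 \<bullet> n3) *\<^sub>R G3 = (n3 \<bullet> G3) *\<^sub>R n3 - f3 *\<^sub>R (n3 \<times> c3)" by (rule key[OF h3])
  have w2: "n2 \<bullet> w = 0" and w3: "n3 \<bullet> w = 0" by (simp_all add: w_def dot_cross_self)
  have d1: "(n1 \<bullet> n1) * (G1 \<bullet> w) = (n1 \<bullet> G1) * D - f1 * ((n1 \<times> c1) \<bullet> w)"
    using arg_cong[OF e1, of "\<lambda>z. z \<bullet> w"] by (simp add: D_def inner_diff_left)
  have d2: "(n2 \<bullet> n2) * (G2 \<bullet> w) = - f2 * ((n2 \<times> c2) \<bullet> w)"
    using arg_cong[OF e2, of "\<lambda>z. z \<bullet> w"] w2 by (simp add: inner_diff_left)
  have d3: "(n3 \<bullet> n3) * (G3 \<bullet> w) = - f3 * ((n3 \<times> c3) \<bullet> w)"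
    using arg_cong[OF e3, of "\<lambda>z. z \<bullet> w"] w3 by (simp add: inner_diff_left)
  have ds: "a1 * (G1 \<bullet> w) + a2 * (G2 \<bullet> w) + a3 * (G3 \<bullet> w) + f1 * (A1 \<bullet> w) + f2 * (A2 \<bullet> w) + f3 * (A3 \<bullet> w) = 0"
    using arg_cong[OF hs, of "\<lambda>z. z \<bullet> w"] by (simp add: inner_add_left)
  have g2: "G2 \<bullet> w = - f2 * ((n2 \<times> c2) \<bullet> w) / (n2 \<bullet> n2)" using d2 N1 by (simp add: field_simps)
  have g3: "G3 \<bullet> w = - f3 * ((n3 \<times> c3) \<bullet> w) / (n3 \<bullet> n3)" using d3 N1 by (simp add: field_simps)
  have g1: "G1 \<bullet> w = - (a2 * (G2 \<bullet> w) + a3 * (G3 \<bullet> w) + f1 * (A1 \<bullet> w) + f2 * (A2 \<bullet> w) + f3 * (A3 \<bullet> w)) / a1"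
    using ds a1 by (simp add: field_simps)
  have mu: "n1 \<bullet> G1 = ((n1 \<bullet> n1) * (G1 \<bullet> w) + f1 * ((n1 \<times> c1) \<bullet> w)) / D"
    using d1 Dnz by (simp add: field_simps)
  have s: "(n1 \<bullet> G1) / (n1 \<bullet> n1) = f1 * kA n1 n2 n3 c1 A1 a1 + f2 * kB n1 n2 n3 n2 c2 A2 a1 a2 + f3 * kB n1 n2 n3 n3 c3 A3 a1 a3"
    unfolding mu g1 g2 g3 kA_def kB_def w_def[symmetric] D_def[symmetric]
    using N1 Dnz a1 by (simp add: field_simps)
  have "G1 = ((n1 \<bullet> G1) / (n1 \<bullet> n1)) *\<^sub>R n1 - (f1 / (n1 \<bullet> n1)) *\<^sub>R (n1 \<times> c1)"
  proof -
    have "G1 = (1 / (n1 \<bullet> n1)) *\<^sub>R ((n1 \<bullet> n1) *\<^sub>R G1)" using N1 by simp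
    also have "\<dots> = ((n1 \<bullet> G1) / (n1 \<bullet> n1)) *\<^sub>R n1 - (f1 / (n1 \<bullet> n1)) *\<^sub>R (n1 \<times> c1)"
      unfolding e1 by (simp add: algebra_simps)
    finally show ?thesis .
  qed
  then show ?thesis unfolding s by simp
qed

unbundle cross3_syntax

lemma line_deriv0:
  assumes "smooth_on U f" "x \<in> U"
  shows "((\<lambda>t. f (x + t *\<^sub>R axis j 1)) has_vector_derivative pdiff j f x) (at 0)"
proof -
  have "(\<lambda>t. iter_pd [] f (x + t *\<^sub>R axis j 1)) differentiable (at 0)"
    using assms unfolding smooth_on_def by blast
  then show ?thesis unfolding pdiff_def by (simp add: vector_derivative_works[symmetric])
qed

lemma shift_deriv:
  fixes g :: "real \<Rightarrow> 'a::real_normed_vector"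
  assumes "((\<lambda>s. g (t + s)) has_vector_derivative d) (at 0)"
  shows "(g has_vector_derivative d) (at t)"
proof -
  have 1: "((\<lambda>s. s - t) has_vector_derivative 1) (at t)"
    by (auto intro!: derivative_eq_intros)
  have 2: "((\<lambda>s. g (t + s)) has_vector_derivative d) (at ((\<lambda>s. s - t) t))" using assms by simp
  have "(((\<lambda>s. g (t + s)) \<circ> (\<lambda>s. s - t)) has_vector_derivative (1 *\<^sub>R d)) (at t)"
    by (rule vector_diff_chain_at[OF 1 2])
  then show ?thesis by (simp add: o_def)
qed

lemma line_deriv:
  assumes "smooth_on U f" "x + t *\<^sub>R axis j 1 \<in> U"
  shows "((\<lambda>s. f (x + s *\<^sub>R axis j 1)) has_vector_derivative pdiff j f (x + t *\<^sub>R axis j 1)) (at t)"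
proof (rule shift_deriv)
  show "((\<lambda>s. f (x + (t + s) *\<^sub>R axis j 1)) has_vector_derivative pdiff j f (x + t *\<^sub>R axis j 1)) (at 0)"
    using line_deriv0[OF assms] by (simp add: scaleR_add_left add.assoc)
qed

definition fco :: "(real^3 \<Rightarrow> real^3) \<Rightarrow> (real^3 \<Rightarrow> real^3) \<Rightarrow> real^3 \<Rightarrow> real" where
  "fco \<nu> \<tau> x = (\<tau> x \<bullet> \<nu> x) / (\<nu> x \<bullet> \<nu> x)"

definition Gv :: "(real^3 \<Rightarrow> real^3) \<Rightarrow> (real^3 \<Rightarrow> real^3) \<Rightarrow> real^3 \<Rightarrow> real^3" where
  "Gv \<nu> \<tau> x = (\<chi> j. ((\<tau> x \<bullet> pdiff j \<nu> x + pdiff j \<tau> x \<bullet> \<nu> x) * (\<nu> x \<bullet> \<nu> x)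
        - (\<tau> x \<bullet> \<nu> x) * (\<nu> x \<bullet> pdiff j \<nu> x + pdiff j \<nu> x \<bullet> \<nu> x)) / ((\<nu> x \<bullet> \<nu> x) * (\<nu> x \<bullet> \<nu> x)))"

definition curlv :: "(real^3 \<Rightarrow> real^3) \<Rightarrow> real^3 \<Rightarrow> real^3" where
  "curlv \<nu> x = vector [pdiff 2 \<nu> x $ 3 - pdiff 3 \<nu> x $ 2, pdiff 3 \<nu> x $ 1 - pdiff 1 \<nu> x $ 3,
                         pdiff 1 \<nu> x $ 2 - pdiff 2 \<nu> x $ 1]"

locale fol =
  fixes U V :: "(real^3) set" and \<nu> \<tau> :: "real^3 \<Rightarrow> real^3"
  assumes opV: "open V" and VU: "V \<subseteq> U" and sm: "smooth_on U \<nu>" and nz: "\<And>x. x \<in> U \<Longrightarrow> \<nu> x \<noteq> 0"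
    and dif: "\<And>x j. x \<in> V \<Longrightarrow> (\<lambda>t. \<tau> (x + t *\<^sub>R axis j 1)) differentiable (at 0)"
    and cl: "closed_form V \<tau>"
    and par: "\<And>x t. x \<in> V \<Longrightarrow> \<nu> x \<bullet> t = 0 \<Longrightarrow> \<tau> x \<bullet> t = 0"
begin

lemma tau_eq: assumes "x \<in> V" shows "\<tau> x = fco \<nu> \<tau> x *\<^sub>R \<nu> x"
proof -
  have nn: "\<nu> x \<bullet> \<nu> x \<noteq> 0" using nz assms VU by auto
  define t where "t = \<tau> x - fco \<nu> \<tau> x *\<^sub>R \<nu> x"
  have "\<nu> x \<bullet> t = 0" using nn unfolding t_def fco_def by (simp add: inner_diff_right inner_commute)
  then have "\<tau> x \<bullet> t = 0" using par assms by blast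
  moreover have "(fco \<nu> \<tau> x *\<^sub>R \<nu> x) \<bullet> t = 0" using \<open>\<nu> x \<bullet> t = 0\<close> by simp
  moreover have "t \<bullet> t = \<tau> x \<bullet> t - (fco \<nu> \<tau> x *\<^sub>R \<nu> x) \<bullet> t"
    unfolding t_def by (simp only: inner_diff_left)
  ultimately have "t \<bullet> t = 0" by simp
  then show ?thesis unfolding t_def by simp
qed

lemma tau_line: assumes "x \<in> V"
  shows "((\<lambda>t. \<tau> (x + t *\<^sub>R axis j 1)) has_vector_derivative pdiff j \<tau> x) (at 0)"
  using dif[OF assms] unfolding pdiff_def by (simp add: vector_derivative_works[symmetric])

lemma f_deriv: assumes "x \<in> V"
  shows "((\<lambda>t. fco \<nu> \<tau> (x + t *\<^sub>R axis j 1)) has_real_derivative (Gv \<nu> \<tau> x $ j)) (at 0)"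
proof -
  have xU: "x \<in> U" using assms VU by auto
  have nn: "\<nu> x \<bullet> \<nu> x \<noteq> 0" using nz xU by auto
  have n1: "((\<lambda>t. \<nu> (x + t *\<^sub>R axis j 1)) has_vector_derivative pdiff j \<nu> x) (at 0)"
    using line_deriv0[OF sm xU] .
  have t1: "((\<lambda>t. \<tau> (x + t *\<^sub>R axis j 1)) has_vector_derivative pdiff j \<tau> x) (at 0)"
    using tau_line[OF assms] .
  have i1: "((\<lambda>t. \<tau> (x + t *\<^sub>R axis j 1) \<bullet> \<nu> (x + t *\<^sub>R axis j 1)) has_real_derivative
      (\<tau> x \<bullet> pdiff j \<nu> x + pdiff j \<tau> x \<bullet> \<nu> x)) (at 0)"
    using bounded_bilinear.has_vector_derivative[OF bounded_bilinear_inner t1 n1]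
    by (simp add: has_real_derivative_iff_has_vector_derivative)
  have i2: "((\<lambda>t. \<nu> (x + t *\<^sub>R axis j 1) \<bullet> \<nu> (x + t *\<^sub>R axis j 1)) has_real_derivative
      (\<nu> x \<bullet> pdiff j \<nu> x + pdiff j \<nu> x \<bullet> \<nu> x)) (at 0)"
    using bounded_bilinear.has_vector_derivative[OF bounded_bilinear_inner n1 n1]
    by (simp add: has_real_derivative_iff_has_vector_derivative)
  have "((\<lambda>t. (\<tau> (x + t *\<^sub>R axis j 1) \<bullet> \<nu> (x + t *\<^sub>R axis j 1)) / (\<nu> (x + t *\<^sub>R axis j 1) \<bullet> \<nu> (x + t *\<^sub>R axis j 1))) has_real_derivative
     ((\<tau> x \<bullet> pdiff j \<nu> x + pdiff j \<tau> x \<bullet> \<nu> x) * (\<nu> x \<bullet> \<nu> x) - (\<tau> x \<bullet> \<nu> x) * (\<nu> x \<bullet> pdiff j \<nu> x + pdiff j \<nu> x \<bullet> \<nu> x))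
       / ((\<nu> x \<bullet> \<nu> x) * (\<nu> x \<bullet> \<nu> x))) (at 0)"
    using DERIV_divide[OF i1 i2] nn by simp
  then show ?thesis unfolding fco_def Gv_def by simp
qed

lemma tau_deriv: assumes "x \<in> V"
  shows "pdiff j \<tau> x = (Gv \<nu> \<tau> x $ j) *\<^sub>R \<nu> x + fco \<nu> \<tau> x *\<^sub>R pdiff j \<nu> x"
proof -
  have xU: "x \<in> U" using assms VU by auto
  have n1: "((\<lambda>t. \<nu> (x + t *\<^sub>R axis j 1)) has_vector_derivative pdiff j \<nu> x) (at 0)"
    using line_deriv0[OF sm xU] .
  have H: "((\<lambda>t. fco \<nu> \<tau> (x + t *\<^sub>R axis j 1) *\<^sub>R \<nu> (x + t *\<^sub>R axis j 1)) has_vector_derivative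
     (fco \<nu> \<tau> x *\<^sub>R pdiff j \<nu> x + (Gv \<nu> \<tau> x $ j) *\<^sub>R \<nu> x)) (at 0)"
    using has_vector_derivative_scaleR[OF f_deriv[OF assms] n1] by simp
  moreover have O: "open {t. x + t *\<^sub>R axis j 1 \<in> V}"
  proof -
    have "open ((\<lambda>t. x + t *\<^sub>R axis j 1) -` V)"
      by (rule continuous_open_vimage[OF opV]) (auto intro!: continuous_intros)
    then show ?thesis by (simp add: vimage_def)
  qed
  moreover have "\<And>t. t \<in> {t. x + t *\<^sub>R axis j 1 \<in> V} \<Longrightarrow>
      fco \<nu> \<tau> (x + t *\<^sub>R axis j 1) *\<^sub>R \<nu> (x + t *\<^sub>R axis j 1) = \<tau> (x + t *\<^sub>R axis j 1)"
    using tau_eq by auto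
  have "((\<lambda>t. \<tau> (x + t *\<^sub>R axis j 1)) has_vector_derivative
     (fco \<nu> \<tau> x *\<^sub>R pdiff j \<nu> x + (Gv \<nu> \<tau> x $ j) *\<^sub>R \<nu> x)) (at 0)"
    by (rule has_vector_derivative_transform_within_open[OF H O]) (use assms tau_eq in force)+
  from vector_derivative_unique_at[OF tau_line[OF assms] this] show ?thesis by simp
qed

lemma cross_rel: assumes "x \<in> V"
  shows "Gv \<nu> \<tau> x \<times> \<nu> x = - fco \<nu> \<tau> x *\<^sub>R curlv \<nu> x"
proof -
  have c: "\<And>j k. pdiff j \<tau> x $ k = pdiff k \<tau> x $ j" using cl assms unfolding closed_form_def by blast
  note d = tau_deriv[OF assms]
  have 1: "(Gv \<nu> \<tau> x $ 2) * \<nu> x $ 3 + fco \<nu> \<tau> x * pdiff 2 \<nu> x $ 3 = (Gv \<nu> \<tau> x $ 3) * \<nu> x $ 2 + fco \<nu> \<tau> x * pdiff 3 \<nu> x $ 2"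
    using c[of 2 3] unfolding d by simp
  have 2: "(Gv \<nu> \<tau> x $ 3) * \<nu> x $ 1 + fco \<nu> \<tau> x * pdiff 3 \<nu> x $ 1 = (Gv \<nu> \<tau> x $ 1) * \<nu> x $ 3 + fco \<nu> \<tau> x * pdiff 1 \<nu> x $ 3"
    using c[of 3 1] unfolding d by simp
  have 3: "(Gv \<nu> \<tau> x $ 1) * \<nu> x $ 2 + fco \<nu> \<tau> x * pdiff 1 \<nu> x $ 2 = (Gv \<nu> \<tau> x $ 2) * \<nu> x $ 1 + fco \<nu> \<tau> x * pdiff 2 \<nu> x $ 1"
    using c[of 1 2] unfolding d by simp
  show ?thesis
    unfolding vec_eq_iff forall_3 using 1 2 3
    by (simp add: cross_components curlv_def vector_def algebra_simps)
qed

end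

unbundle cross3_syntax

definition prerel :: "(real^3) set \<Rightarrow> (real^3 \<Rightarrow> real^3) \<Rightarrow> (real^3 \<Rightarrow> real^3) \<Rightarrow> (real^3 \<Rightarrow> real^3)
     \<Rightarrow> (real^3 \<Rightarrow> real^3) \<Rightarrow> (nat \<Rightarrow> real^3 \<Rightarrow> real^3) \<Rightarrow> bool" where
  "prerel V \<nu>1 \<nu>2 \<nu>3 v \<sigma> \<longleftrightarrow>
     (\<forall>i<3. (\<forall>x\<in>V. \<forall>j. (\<lambda>t. \<sigma> i (x + t *\<^sub>R axis j 1)) differentiable (at 0)) \<and> closed_form V (\<sigma> i)) \<and>
     (\<forall>x\<in>V. \<forall>t. \<nu>1 x \<bullet> t = 0 \<longrightarrow> \<sigma> 0 x \<bullet> t = 0) \<and>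
     (\<forall>x\<in>V. \<forall>t. \<nu>2 x \<bullet> t = 0 \<longrightarrow> \<sigma> 1 x \<bullet> t = 0) \<and>
     (\<forall>x\<in>V. \<forall>t. \<nu>3 x \<bullet> t = 0 \<longrightarrow> \<sigma> 2 x \<bullet> t = 0) \<and>
     (\<forall>x\<in>V. (\<sigma> 0 x + \<sigma> 1 x + \<sigma> 2 x) \<bullet> v x = 0)"

definition Av :: "(real^3 \<Rightarrow> real^3) \<Rightarrow> (real^3 \<Rightarrow> real^3) \<Rightarrow> real^3 \<Rightarrow> real^3" where
  "Av \<nu> v x = (\<chi> j. pdiff j \<nu> x \<bullet> v x + \<nu> x \<bullet> pdiff j v x)"

definition kap1 :: "(real^3 \<Rightarrow> real^3) \<Rightarrow> (real^3 \<Rightarrow> real^3) \<Rightarrow> (real^3 \<Rightarrow> real^3) \<Rightarrow> (real^3 \<Rightarrow> real^3) \<Rightarrow> real^3 \<Rightarrow> real" where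
  "kap1 \<nu>1 \<nu>2 \<nu>3 v x = norm (\<nu>1 x \<times> curlv \<nu>1 x) / (\<nu>1 x \<bullet> \<nu>1 x)
    + (\<bar>kA (\<nu>1 x) (\<nu>2 x) (\<nu>3 x) (curlv \<nu>1 x) (Av \<nu>1 v x) (\<nu>1 x \<bullet> v x)\<bar>
     + \<bar>kB (\<nu>1 x) (\<nu>2 x) (\<nu>3 x) (\<nu>2 x) (curlv \<nu>2 x) (Av \<nu>2 v x) (\<nu>1 x \<bullet> v x) (\<nu>2 x \<bullet> v x)\<bar>
     + \<bar>kB (\<nu>1 x) (\<nu>2 x) (\<nu>3 x) (\<nu>3 x) (curlv \<nu>3 x) (Av \<nu>3 v x) (\<nu>1 x \<bullet> v x) (\<nu>3 x \<bullet> v x)\<bar>) * norm (\<nu>1 x)"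

lemma alg_bound:
  fixes n1 n2 n3 c1 c2 c3 G1 G2 G3 A1 A2 A3 :: "real^3" and f1 f2 f3 a1 a2 a3 :: real
  assumes "G1 = (- (f1 / (n1 \<bullet> n1))) *\<^sub>R (n1 \<times> c1)
     + (f1 * kA n1 n2 n3 c1 A1 a1 + f2 * kB n1 n2 n3 n2 c2 A2 a1 a2 + f3 * kB n1 n2 n3 n3 c3 A3 a1 a3) *\<^sub>R n1"
    and "n1 \<noteq> 0"
  shows "norm G1 \<le> (norm (n1 \<times> c1) / (n1 \<bullet> n1) + (\<bar>kA n1 n2 n3 c1 A1 a1\<bar> + \<bar>kB n1 n2 n3 n2 c2 A2 a1 a2\<bar>
     + \<bar>kB n1 n2 n3 n3 c3 A3 a1 a3\<bar>) * norm n1) * (\<bar>f1\<bar> + \<bar>f2\<bar> + \<bar>f3\<bar>)"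
proof -
  define K1 where "K1 = kA n1 n2 n3 c1 A1 a1"
  define K2 where "K2 = kB n1 n2 n3 n2 c2 A2 a1 a2"
  define K3 where "K3 = kB n1 n2 n3 n3 c3 A3 a1 a3"
  have np: "n1 \<bullet> n1 > 0" using assms(2) by simp
  have "norm G1 \<le> norm ((- (f1 / (n1 \<bullet> n1))) *\<^sub>R (n1 \<times> c1)) + norm ((f1 * K1 + f2 * K2 + f3 * K3) *\<^sub>R n1)"
    unfolding assms(1) K1_def K2_def K3_def by (rule norm_triangle_ineq)
  also have "\<dots> = \<bar>f1\<bar> * (norm (n1 \<times> c1) / (n1 \<bullet> n1)) + \<bar>f1 * K1 + f2 * K2 + f3 * K3\<bar> * norm n1"
    using np by simp
  also have "\<dots> \<le> \<bar>f1\<bar> * (norm (n1 \<times> c1) / (n1 \<bullet> n1)) + ((\<bar>K1\<bar> + \<bar>K2\<bar> + \<bar>K3\<bar>) * (\<bar>f1\<bar> + \<bar>f2\<bar> + \<bar>f3\<bar>)) * norm n1"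
  proof -
    have "\<bar>f1 * K1 + f2 * K2 + f3 * K3\<bar> \<le> \<bar>f1\<bar> * \<bar>K1\<bar> + \<bar>f2\<bar> * \<bar>K2\<bar> + \<bar>f3\<bar> * \<bar>K3\<bar>"
      using abs_triangle_ineq[of "f1*K1 + f2*K2" "f3*K3"] abs_triangle_ineq[of "f1*K1" "f2*K2"]
      unfolding abs_mult by linarith
    also have "\<dots> \<le> (\<bar>K1\<bar> + \<bar>K2\<bar> + \<bar>K3\<bar>) * (\<bar>f1\<bar> + \<bar>f2\<bar> + \<bar>f3\<bar>)"
    proof -
      have "(\<bar>K1\<bar> + \<bar>K2\<bar> + \<bar>K3\<bar>) * (\<bar>f1\<bar> + \<bar>f2\<bar> + \<bar>f3\<bar>) = \<bar>f1\<bar> * \<bar>K1\<bar> + \<bar>f2\<bar> * \<bar>K2\<bar> + \<bar>f3\<bar> * \<bar>K3\<bar>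
         + (\<bar>K1\<bar> * \<bar>f2\<bar> + \<bar>K1\<bar> * \<bar>f3\<bar> + \<bar>K2\<bar> * \<bar>f1\<bar> + \<bar>K2\<bar> * \<bar>f3\<bar> + \<bar>K3\<bar> * \<bar>f1\<bar> + \<bar>K3\<bar> * \<bar>f2\<bar>)"
        by (simp add: algebra_simps)
      moreover have "0 \<le> \<bar>K1\<bar> * \<bar>f2\<bar> + \<bar>K1\<bar> * \<bar>f3\<bar> + \<bar>K2\<bar> * \<bar>f1\<bar> + \<bar>K2\<bar> * \<bar>f3\<bar> + \<bar>K3\<bar> * \<bar>f1\<bar> + \<bar>K3\<bar> * \<bar>f2\<bar>"
        by simp
      ultimately show ?thesis by linarith
    qed
    finally show ?thesis by (simp add: mult_right_mono)
  qed
  also have "\<dots> \<le> (norm (n1 \<times> c1) / (n1 \<bullet> n1) + (\<bar>K1\<bar> + \<bar>K2\<bar> + \<bar>K3\<bar>) * norm n1) * (\<bar>f1\<bar> + \<bar>f2\<bar> + \<bar>f3\<bar>)"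
  proof -
    have "\<bar>f1\<bar> * (norm (n1 \<times> c1) / (n1 \<bullet> n1)) \<le> (norm (n1 \<times> c1) / (n1 \<bullet> n1)) * (\<bar>f1\<bar> + \<bar>f2\<bar> + \<bar>f3\<bar>)"
    proof -
      have q: "0 \<le> norm (n1 \<times> c1) / (n1 \<bullet> n1)" using np by simp
      have "\<bar>f1\<bar> \<le> \<bar>f1\<bar> + \<bar>f2\<bar> + \<bar>f3\<bar>" by simp
      then have "\<bar>f1\<bar> * (norm (n1 \<times> c1) / (n1 \<bullet> n1)) \<le> (\<bar>f1\<bar> + \<bar>f2\<bar> + \<bar>f3\<bar>) * (norm (n1 \<times> c1) / (n1 \<bullet> n1))"
        using q by (rule mult_right_mono)
      then show ?thesis by (metis mult.commute)
    qed
    then show ?thesis by (simp add: distrib_right)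
  qed
  finally show ?thesis unfolding K1_def K2_def K3_def .
qed

lemma continuous_on_vector3[continuous_intros]:
  assumes "continuous_on S a" "continuous_on S b" "continuous_on S c"
  shows "continuous_on S (\<lambda>x. vector [a x, b x, c x] :: real^3)"
proof -
  have "continuous_on S (\<lambda>x. \<chi> i. (vector [a x, b x, c x] :: real^3) $ i)"
  proof (rule continuous_on_vec_lambda)
    fix i :: 3
    show "continuous_on S (\<lambda>x. (vector [a x, b x, c x] :: real^3) $ i)"
      using exhaust_3[of i] assms by auto
  qed
  then show ?thesis by simp
qed


unbundle cross3_syntax

lemma smooth_cont: "smooth_on U f \<Longrightarrow> continuous_on U f"
  unfolding smooth_on_def by (metis iter_pd.simps(1))

lemma smooth_pdiff_cont: "smooth_on U f \<Longrightarrow> continuous_on U (pdiff j f)"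
  unfolding smooth_on_def by (metis iter_pd.simps)

lemma triple_cyc: "a \<bullet> (b \<times> c) = b \<bullet> (c \<times> a)" for a b c :: "real^3"
  by (simp add: cross3_simps)

lemma kap1_cont:
  assumes sm: "smooth_on U n1" "smooth_on U n2" "smooth_on U n3" "smooth_on U v"
    and nz: "\<And>x. x \<in> U \<Longrightarrow> n1 x \<noteq> 0" "\<And>x. x \<in> U \<Longrightarrow> n2 x \<noteq> 0" "\<And>x. x \<in> U \<Longrightarrow> n3 x \<noteq> 0"
    and a: "\<And>x. x \<in> U \<Longrightarrow> n1 x \<bullet> v x \<noteq> 0"
    and D: "\<And>x. x \<in> U \<Longrightarrow> n1 x \<bullet> (n2 x \<times> n3 x) \<noteq> 0"
  shows "continuous_on U (kap1 n1 n2 n3 v)"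
proof -
  have c: "continuous_on U n1" "continuous_on U n2" "continuous_on U n3" "continuous_on U v"
    using sm smooth_cont by blast+
  have cp: "\<And>j. continuous_on U (pdiff j n1)" "\<And>j. continuous_on U (pdiff j n2)"
     "\<And>j. continuous_on U (pdiff j n3)" "\<And>j. continuous_on U (pdiff j v)"
    using sm smooth_pdiff_cont by blast+
  have cc: "\<And>n. (\<And>j. continuous_on U (pdiff j n)) \<Longrightarrow> continuous_on U (curlv n)"
    unfolding curlv_def by (intro continuous_intros) auto
  have cA: "\<And>n. continuous_on U n \<Longrightarrow> (\<And>j. continuous_on U (pdiff j n)) \<Longrightarrow> continuous_on U (Av n v)"
    unfolding Av_def using c cp by (intro continuous_intros) auto
  have c1: "continuous_on U (curlv n1)" "continuous_on U (curlv n2)" "continuous_on U (curlv n3)"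
    using cc cp by blast+
  have c2: "continuous_on U (Av n1 v)" "continuous_on U (Av n2 v)" "continuous_on U (Av n3 v)"
    using cA c cp by blast+
  have nn: "\<And>x. x \<in> U \<Longrightarrow> n1 x \<bullet> n1 x \<noteq> 0" "\<And>x. x \<in> U \<Longrightarrow> n2 x \<bullet> n2 x \<noteq> 0" "\<And>x. x \<in> U \<Longrightarrow> n3 x \<bullet> n3 x \<noteq> 0"
    using nz by auto
  show ?thesis
    unfolding kap1_def kA_def kB_def
    using c c1 c2 nn a D
    by (intro continuous_intros continuous_on_cross) auto
qed

locale web =
  fixes U :: "(real^3) set" and \<nu>1 \<nu>2 \<nu>3 v :: "real^3 \<Rightarrow> real^3"
  assumes opU: "open U"
    and s1: "surface_foliation U \<nu>1" and s2: "surface_foliation U \<nu>2" and s3: "surface_foliation U \<nu>3"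
    and cv: "curve_foliation U v"
    and nd: "nondegenerate_web U \<nu>1 \<nu>2 \<nu>3 v"
begin

lemma sm: "smooth_on U \<nu>1" "smooth_on U \<nu>2" "smooth_on U \<nu>3" "smooth_on U v"
  using s1 s2 s3 cv unfolding surface_foliation_def curve_foliation_def by auto

lemma nz: "\<And>x. x \<in> U \<Longrightarrow> \<nu>1 x \<noteq> 0" "\<And>x. x \<in> U \<Longrightarrow> \<nu>2 x \<noteq> 0" "\<And>x. x \<in> U \<Longrightarrow> \<nu>3 x \<noteq> 0"
  using s1 s2 s3 unfolding surface_foliation_def by auto

lemma av: "\<And>x. x \<in> U \<Longrightarrow> \<nu>1 x \<bullet> v x \<noteq> 0" "\<And>x. x \<in> U \<Longrightarrow> \<nu>2 x \<bullet> v x \<noteq> 0" "\<And>x. x \<in> U \<Longrightarrow> \<nu>3 x \<bullet> v x \<noteq> 0"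
  using nd unfolding nondegenerate_web_def by auto

lemma Dnz: "\<And>x. x \<in> U \<Longrightarrow> \<nu>1 x \<bullet> (\<nu>2 x \<times> \<nu>3 x) \<noteq> 0"
  using nd unfolding nondegenerate_web_def by (simp add: dot_cross_det)

lemma Dnz': "\<And>x. x \<in> U \<Longrightarrow> \<nu>2 x \<bullet> (\<nu>3 x \<times> \<nu>1 x) \<noteq> 0" "\<And>x. x \<in> U \<Longrightarrow> \<nu>3 x \<bullet> (\<nu>1 x \<times> \<nu>2 x) \<noteq> 0"
  using Dnz by (metis triple_cyc)+

definition kap where "kap x = kap1 \<nu>1 \<nu>2 \<nu>3 v x + kap1 \<nu>2 \<nu>3 \<nu>1 v x + kap1 \<nu>3 \<nu>1 \<nu>2 v x"

lemma kap_cont: "continuous_on U kap"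
  unfolding kap_def
  by (intro continuous_on_add kap1_cont sm nz av Dnz Dnz'; assumption)

lemma kap1_nonneg: "0 \<le> kap1 n1 n2 n3 w x"
  unfolding kap1_def by (intro add_nonneg_nonneg divide_nonneg_nonneg mult_nonneg_nonneg) auto

lemma fols:
  assumes "open V" "V \<subseteq> U" "prerel V \<nu>1 \<nu>2 \<nu>3 v \<sigma>"
  shows "fol U V \<nu>1 (\<sigma> 0)" "fol U V \<nu>2 (\<sigma> 1)" "fol U V \<nu>3 (\<sigma> 2)"
  using assms sm nz unfolding fol_def prerel_def by auto

end

unbundle cross3_syntax

context web begin

lemma cons:
  assumes opV: "open V" and VU: "V \<subseteq> U" and pr: "prerel V \<nu>1 \<nu>2 \<nu>3 v \<sigma>" and x: "x \<in> V"
  shows "(\<nu>1 x \<bullet> v x) *\<^sub>R Gv \<nu>1 (\<sigma> 0) x + (\<nu>2 x \<bullet> v x) *\<^sub>R Gv \<nu>2 (\<sigma> 1) x + (\<nu>3 x \<bullet> v x) *\<^sub>R Gv \<nu>3 (\<sigma> 2) x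
     + fco \<nu>1 (\<sigma> 0) x *\<^sub>R Av \<nu>1 v x + fco \<nu>2 (\<sigma> 1) x *\<^sub>R Av \<nu>2 v x + fco \<nu>3 (\<sigma> 2) x *\<^sub>R Av \<nu>3 v x = 0"
proof -
  interpret F1: fol U V \<nu>1 "\<sigma> 0" using fols[OF opV VU pr] by blast
  interpret F2: fol U V \<nu>2 "\<sigma> 1" using fols[OF opV VU pr] by blast
  interpret F3: fol U V \<nu>3 "\<sigma> 2" using fols[OF opV VU pr] by blast
  have xU: "x \<in> U" using x VU by auto
  have zero: "\<And>y. y \<in> V \<Longrightarrow> (\<sigma> 0 y + \<sigma> 1 y + \<sigma> 2 y) \<bullet> v y = 0" using pr unfolding prerel_def by blast
  have comp: "(pdiff j (\<sigma> 0) x + pdiff j (\<sigma> 1) x + pdiff j (\<sigma> 2) x) \<bullet> v x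
      + (\<sigma> 0 x + \<sigma> 1 x + \<sigma> 2 x) \<bullet> pdiff j v x = 0" for j
  proof -
    have dS: "((\<lambda>t. \<sigma> 0 (x + t *\<^sub>R axis j 1) + \<sigma> 1 (x + t *\<^sub>R axis j 1) + \<sigma> 2 (x + t *\<^sub>R axis j 1))
       has_vector_derivative (pdiff j (\<sigma> 0) x + pdiff j (\<sigma> 1) x + pdiff j (\<sigma> 2) x)) (at 0)"
      by (intro has_vector_derivative_add F1.tau_line F2.tau_line F3.tau_line x)
    have dv: "((\<lambda>t. v (x + t *\<^sub>R axis j 1)) has_vector_derivative pdiff j v x) (at 0)"
      using line_deriv0[OF sm(4) xU] .
    have H: "((\<lambda>t. (\<sigma> 0 (x + t *\<^sub>R axis j 1) + \<sigma> 1 (x + t *\<^sub>R axis j 1) + \<sigma> 2 (x + t *\<^sub>R axis j 1)) \<bullet> v (x + t *\<^sub>R axis j 1))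
       has_vector_derivative ((\<sigma> 0 x + \<sigma> 1 x + \<sigma> 2 x) \<bullet> pdiff j v x + (pdiff j (\<sigma> 0) x + pdiff j (\<sigma> 1) x + pdiff j (\<sigma> 2) x) \<bullet> v x)) (at 0)"
      using bounded_bilinear.has_vector_derivative[OF bounded_bilinear_inner dS dv] by simp
    have O: "open {t. x + t *\<^sub>R axis j 1 \<in> V}"
    proof -
      have "open ((\<lambda>t. x + t *\<^sub>R axis j 1) -` V)"
        by (rule continuous_open_vimage[OF opV]) (auto intro!: continuous_intros)
      then show ?thesis by (simp add: vimage_def)
    qed
    have H0: "((\<lambda>t. (\<sigma> 0 (x + t *\<^sub>R axis j 1) + \<sigma> 1 (x + t *\<^sub>R axis j 1) + \<sigma> 2 (x + t *\<^sub>R axis j 1)) \<bullet> v (x + t *\<^sub>R axis j 1))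
       has_vector_derivative 0) (at 0)"
      by (rule has_vector_derivative_transform_within_open[OF has_vector_derivative_const O]) (use x zero in force)+
    from vector_derivative_unique_at[OF H H0] show ?thesis by simp
  qed
  show ?thesis
    unfolding vec_eq_iff
  proof (intro allI)
    fix j
    from comp[of j] show "((\<nu>1 x \<bullet> v x) *\<^sub>R Gv \<nu>1 (\<sigma> 0) x + (\<nu>2 x \<bullet> v x) *\<^sub>R Gv \<nu>2 (\<sigma> 1) x + (\<nu>3 x \<bullet> v x) *\<^sub>R Gv \<nu>3 (\<sigma> 2) x
     + fco \<nu>1 (\<sigma> 0) x *\<^sub>R Av \<nu>1 v x + fco \<nu>2 (\<sigma> 1) x *\<^sub>R Av \<nu>2 v x + fco \<nu>3 (\<sigma> 2) x *\<^sub>R Av \<nu>3 v x) $ j = 0 $ j"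
      unfolding F1.tau_deriv[OF x] F2.tau_deriv[OF x] F3.tau_deriv[OF x]
      apply (subst (asm) F1.tau_eq[OF x], subst (asm) F2.tau_eq[OF x], subst (asm) F3.tau_eq[OF x])
      by (simp add: Av_def inner_add_left inner_add_right algebra_simps)
  qed
qed

lemma gbound:
  assumes opV: "open V" and VU: "V \<subseteq> U" and pr: "prerel V \<nu>1 \<nu>2 \<nu>3 v \<sigma>" and x: "x \<in> V"
  defines "S \<equiv> \<bar>fco \<nu>1 (\<sigma> 0) x\<bar> + \<bar>fco \<nu>2 (\<sigma> 1) x\<bar> + \<bar>fco \<nu>3 (\<sigma> 2) x\<bar>"
  shows "norm (Gv \<nu>1 (\<sigma> 0) x) \<le> kap x * S" "norm (Gv \<nu>2 (\<sigma> 1) x) \<le> kap x * S"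
    "norm (Gv \<nu>3 (\<sigma> 2) x) \<le> kap x * S"
proof -
  interpret F1: fol U V \<nu>1 "\<sigma> 0" using fols[OF opV VU pr] by blast
  interpret F2: fol U V \<nu>2 "\<sigma> 1" using fols[OF opV VU pr] by blast
  interpret F3: fol U V \<nu>3 "\<sigma> 2" using fols[OF opV VU pr] by blast
  have xU: "x \<in> U" using x VU by auto
  note hs = cons[OF opV VU pr x]
  have hs2: "(\<nu>2 x \<bullet> v x) *\<^sub>R Gv \<nu>2 (\<sigma> 1) x + (\<nu>3 x \<bullet> v x) *\<^sub>R Gv \<nu>3 (\<sigma> 2) x + (\<nu>1 x \<bullet> v x) *\<^sub>R Gv \<nu>1 (\<sigma> 0) x
     + fco \<nu>2 (\<sigma> 1) x *\<^sub>R Av \<nu>2 v x + fco \<nu>3 (\<sigma> 2) x *\<^sub>R Av \<nu>3 v x + fco \<nu>1 (\<sigma> 0) x *\<^sub>R Av \<nu>1 v x = 0"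
    using hs by (simp add: ac_simps)
  have hs3: "(\<nu>3 x \<bullet> v x) *\<^sub>R Gv \<nu>3 (\<sigma> 2) x + (\<nu>1 x \<bullet> v x) *\<^sub>R Gv \<nu>1 (\<sigma> 0) x + (\<nu>2 x \<bullet> v x) *\<^sub>R Gv \<nu>2 (\<sigma> 1) x
     + fco \<nu>3 (\<sigma> 2) x *\<^sub>R Av \<nu>3 v x + fco \<nu>1 (\<sigma> 0) x *\<^sub>R Av \<nu>1 v x + fco \<nu>2 (\<sigma> 1) x *\<^sub>R Av \<nu>2 v x = 0"
    using hs by (simp add: ac_simps)
  have S0: "0 \<le> S" unfolding S_def by simp
  have k: "kap1 \<nu>1 \<nu>2 \<nu>3 v x \<le> kap x" "kap1 \<nu>2 \<nu>3 \<nu>1 v x \<le> kap x" "kap1 \<nu>3 \<nu>1 \<nu>2 v x \<le> kap x"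
    unfolding kap_def using kap1_nonneg by (smt (verit))+
  have "norm (Gv \<nu>1 (\<sigma> 0) x) \<le> kap1 \<nu>1 \<nu>2 \<nu>3 v x * S"
    using alg_bound[OF alg[OF F1.cross_rel[OF x] F2.cross_rel[OF x] F3.cross_rel[OF x] hs nz(1)[OF xU] nz(2)[OF xU] nz(3)[OF xU]
      av(1)[OF xU] Dnz[OF xU]] nz(1)[OF xU]]
    unfolding kap1_def S_def .
  also have "\<dots> \<le> kap x * S" using k(1) S0 by (rule mult_right_mono)
  finally show "norm (Gv \<nu>1 (\<sigma> 0) x) \<le> kap x * S" .
  have "norm (Gv \<nu>2 (\<sigma> 1) x) \<le> kap1 \<nu>2 \<nu>3 \<nu>1 v x * S"
    using alg_bound[OF alg[OF F2.cross_rel[OF x] F3.cross_rel[OF x] F1.cross_rel[OF x] hs2 nz(2)[OF xU] nz(3)[OF xU] nz(1)[OF xU]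
      av(2)[OF xU] Dnz'(1)[OF xU]] nz(2)[OF xU]]
    unfolding kap1_def S_def by (simp add: ac_simps)
  also have "\<dots> \<le> kap x * S" using k(2) S0 by (rule mult_right_mono)
  finally show "norm (Gv \<nu>2 (\<sigma> 1) x) \<le> kap x * S" .
  have "norm (Gv \<nu>3 (\<sigma> 2) x) \<le> kap1 \<nu>3 \<nu>1 \<nu>2 v x * S"
    using alg_bound[OF alg[OF F3.cross_rel[OF x] F1.cross_rel[OF x] F2.cross_rel[OF x] hs3 nz(3)[OF xU] nz(1)[OF xU] nz(2)[OF xU]
      av(3)[OF xU] Dnz'(2)[OF xU]] nz(3)[OF xU]]
    unfolding kap1_def S_def by (simp add: ac_simps)
  also have "\<dots> \<le> kap x * S" using k(3) S0 by (rule mult_right_mono)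
  finally show "norm (Gv \<nu>3 (\<sigma> 2) x) \<le> kap x * S" .
qed

end


lemma ode_zero:
  fixes \<phi> \<phi>' :: "real \<Rightarrow> real"
  assumes d: "\<And>t. t \<in> {a<..<b} \<Longrightarrow> (\<phi> has_real_derivative \<phi>' t) (at t)"
    and bd: "\<And>t. t \<in> {a<..<b} \<Longrightarrow> \<bar>\<phi>' t\<bar> \<le> L * \<phi> t"
    and nn: "\<And>t. t \<in> {a<..<b} \<Longrightarrow> 0 \<le> \<phi> t"
    and t0: "t0 \<in> {a<..<b}" and z: "\<phi> t0 = 0" and t: "t \<in> {a<..<b}"
  shows "\<phi> t = 0"
proof (cases "t0 \<le> t")
  case True
  define \<psi> where "\<psi> s = exp (- L * s) * \<phi> s" for s
  have "\<psi> t0 \<ge> \<psi> t"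
  proof (rule DERIV_nonpos_imp_nonincreasing[OF True])
    fix s assume s: "t0 \<le> s" "s \<le> t"
    then have sI: "s \<in> {a<..<b}" using t0 t by auto
    have "(\<psi> has_real_derivative (exp (- L * s) * (- L) * \<phi> s + exp (- L * s) * \<phi>' s)) (at s)"
      unfolding \<psi>_def by (auto intro!: derivative_eq_intros d[OF sI])
    moreover have "exp (- L * s) * (- L) * \<phi> s + exp (- L * s) * \<phi>' s = exp (- L * s) * (\<phi>' s - L * \<phi> s)"
      by (simp add: algebra_simps)
    moreover have "exp (- L * s) * (\<phi>' s - L * \<phi> s) \<le> 0"
      using bd[OF sI] by (intro mult_nonneg_nonpos) auto
    ultimately show "\<exists>y. (\<psi> has_real_derivative y) (at s) \<and> y \<le> 0" by auto
  qed
  then have "exp (- L * t) * \<phi> t \<le> 0" unfolding \<psi>_def using z by simp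
  moreover have "0 \<le> \<phi> t" using nn t by auto
  ultimately show ?thesis by (simp add: mult_le_0_iff)
next
  case False
  then have le: "t \<le> t0" by simp
  define \<psi> where "\<psi> s = exp (L * s) * \<phi> s" for s
  have "\<psi> t \<le> \<psi> t0"
  proof (rule DERIV_nonneg_imp_nondecreasing[OF le])
    fix s assume s: "t \<le> s" "s \<le> t0"
    then have sI: "s \<in> {a<..<b}" using t0 t by auto
    have "(\<psi> has_real_derivative (exp (L * s) * L * \<phi> s + exp (L * s) * \<phi>' s)) (at s)"
      unfolding \<psi>_def by (auto intro!: derivative_eq_intros d[OF sI])
    moreover have "exp (L * s) * L * \<phi> s + exp (L * s) * \<phi>' s = exp (L * s) * (\<phi>' s + L * \<phi> s)"
      by (simp add: algebra_simps)
    moreover have "0 \<le> exp (L * s) * (\<phi>' s + L * \<phi> s)"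
      using bd[OF sI] by (intro mult_nonneg_nonneg) auto
    ultimately show "\<exists>y. (\<psi> has_real_derivative y) (at s) \<and> 0 \<le> y" by auto
  qed
  then have "exp (L * t) * \<phi> t \<le> 0" unfolding \<psi>_def using z by simp
  moreover have "0 \<le> \<phi> t" using nn t by auto
  ultimately show ?thesis by (simp add: mult_le_0_iff)
qed



lemma quad_bound:
  fixes u1 u2 u3 w1 w2 w3 K :: real
  assumes "\<bar>w1\<bar> \<le> K * (\<bar>u1\<bar> + \<bar>u2\<bar> + \<bar>u3\<bar>)" "\<bar>w2\<bar> \<le> K * (\<bar>u1\<bar> + \<bar>u2\<bar> + \<bar>u3\<bar>)"
    "\<bar>w3\<bar> \<le> K * (\<bar>u1\<bar> + \<bar>u2\<bar> + \<bar>u3\<bar>)" "0 \<le> K"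
  shows "\<bar>2 * u1 * w1 + 2 * u2 * w2 + 2 * u3 * w3\<bar> \<le> (6 * K) * (u1\<^sup>2 + u2\<^sup>2 + u3\<^sup>2)"
proof -
  define S where "S = \<bar>u1\<bar> + \<bar>u2\<bar> + \<bar>u3\<bar>"
  have S0: "0 \<le> S" unfolding S_def by simp
  have "\<bar>2 * u1 * w1 + 2 * u2 * w2 + 2 * u3 * w3\<bar> \<le> 2 * (\<bar>u1\<bar> * \<bar>w1\<bar> + \<bar>u2\<bar> * \<bar>w2\<bar> + \<bar>u3\<bar> * \<bar>w3\<bar>)"
  proof -
    have e: "\<bar>2 * u1 * w1\<bar> = 2 * (\<bar>u1\<bar> * \<bar>w1\<bar>)" "\<bar>2 * u2 * w2\<bar> = 2 * (\<bar>u2\<bar> * \<bar>w2\<bar>)"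
      "\<bar>2 * u3 * w3\<bar> = 2 * (\<bar>u3\<bar> * \<bar>w3\<bar>)" by (simp_all add: abs_mult)
    show ?thesis using abs_triangle_ineq[of "2*u1*w1 + 2*u2*w2" "2*u3*w3"] abs_triangle_ineq[of "2*u1*w1" "2*u2*w2"] e
      by (smt (verit))
  qed
  also have "\<dots> \<le> 2 * (\<bar>u1\<bar> * (K * S) + \<bar>u2\<bar> * (K * S) + \<bar>u3\<bar> * (K * S))"
    using assms unfolding S_def[symmetric] by (intro mult_left_mono add_mono) auto
  also have "\<dots> = 2 * K * (S * S)" unfolding S_def by (simp add: algebra_simps)
  also have "\<dots> \<le> 2 * K * (3 * (u1\<^sup>2 + u2\<^sup>2 + u3\<^sup>2))"
  proof (rule mult_left_mono)
    have a: "2 * \<bar>x\<bar> * \<bar>y\<bar> \<le> x\<^sup>2 + y\<^sup>2" for x y :: real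
      using sum_squares_bound[of "\<bar>x\<bar>" "\<bar>y\<bar>"] by (simp add: power2_eq_square)
    have "S * S = u1\<^sup>2 + u2\<^sup>2 + u3\<^sup>2 + 2 * \<bar>u1\<bar> * \<bar>u2\<bar> + 2 * \<bar>u1\<bar> * \<bar>u3\<bar> + 2 * \<bar>u2\<bar> * \<bar>u3\<bar>"
      unfolding S_def by (simp add: algebra_simps power2_eq_square)
    then show "S * S \<le> 3 * (u1\<^sup>2 + u2\<^sup>2 + u3\<^sup>2)" using a[of u1 u2] a[of u1 u3] a[of u2 u3] by (smt (verit))
  qed (use assms in simp)
  also have "\<dots> = (6 * K) * (u1\<^sup>2 + u2\<^sup>2 + u3\<^sup>2)" by simp
  finally show ?thesis .
qed


lemma shift_line_real:
  fixes y e :: "real^3" and h :: "real^3 \<Rightarrow> real"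
  assumes "((\<lambda>r. h (y + s *\<^sub>R e + r *\<^sub>R e)) has_real_derivative d) (at 0)"
  shows "((\<lambda>r. h (y + r *\<^sub>R e)) has_real_derivative d) (at s)"
proof -
  have eq: "(\<lambda>r. h (y + (s + r) *\<^sub>R e)) = (\<lambda>r. h (y + s *\<^sub>R e + r *\<^sub>R e))"
    by (auto simp: algebra_simps)
  have "((\<lambda>r. h (y + (s + r) *\<^sub>R e)) has_vector_derivative d) (at 0)"
    unfolding eq using assms by (simp add: has_real_derivative_iff_has_vector_derivative)
  then have "((\<lambda>r. h (y + r *\<^sub>R e)) has_vector_derivative d) (at s)"
    by (rule shift_deriv)
  then show ?thesis by (simp add: has_real_derivative_iff_has_vector_derivative)
qed

context web begin

lemma kap_nonneg: "0 \<le> kap x"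
  unfolding kap_def using kap1_nonneg by (intro add_nonneg_nonneg) auto

lemma line_zero:
  assumes opV: "open V" and VU: "V \<subseteq> U" and pr: "prerel V \<nu>1 \<nu>2 \<nu>3 v \<sigma>"
    and K: "\<And>z. z \<in> V \<Longrightarrow> kap z \<le> K"
    and line: "\<And>t. t \<in> {a<..<b} \<Longrightarrow> y + t *\<^sub>R axis j 1 \<in> V" and a0: "0 \<in> {a<..<b}"
    and z: "fco \<nu>1 (\<sigma> 0) y = 0" "fco \<nu>2 (\<sigma> 1) y = 0" "fco \<nu>3 (\<sigma> 2) y = 0"
    and t: "t \<in> {a<..<b}"
  shows "fco \<nu>1 (\<sigma> 0) (y + t *\<^sub>R axis j 1) = 0 \<and> fco \<nu>2 (\<sigma> 1) (y + t *\<^sub>R axis j 1) = 0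
     \<and> fco \<nu>3 (\<sigma> 2) (y + t *\<^sub>R axis j 1) = 0"
proof -
  interpret F1: fol U V \<nu>1 "\<sigma> 0" using fols[OF opV VU pr] by blast
  interpret F2: fol U V \<nu>2 "\<sigma> 1" using fols[OF opV VU pr] by blast
  interpret F3: fol U V \<nu>3 "\<sigma> 2" using fols[OF opV VU pr] by blast
  define f1 where "f1 s = fco \<nu>1 (\<sigma> 0) (y + s *\<^sub>R axis j 1)" for s
  define f2 where "f2 s = fco \<nu>2 (\<sigma> 1) (y + s *\<^sub>R axis j 1)" for s
  define f3 where "f3 s = fco \<nu>3 (\<sigma> 2) (y + s *\<^sub>R axis j 1)" for s
  define g1 where "g1 s = Gv \<nu>1 (\<sigma> 0) (y + s *\<^sub>R axis j 1) $ j" for s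
  define g2 where "g2 s = Gv \<nu>2 (\<sigma> 1) (y + s *\<^sub>R axis j 1) $ j" for s
  define g3 where "g3 s = Gv \<nu>3 (\<sigma> 2) (y + s *\<^sub>R axis j 1) $ j" for s
  have K0: "0 \<le> K" using K[OF line[OF a0]] kap_nonneg by (meson order_trans)
  have df: "(f1 has_real_derivative g1 s) (at s)" "(f2 has_real_derivative g2 s) (at s)"
     "(f3 has_real_derivative g3 s) (at s)" if s: "s \<in> {a<..<b}" for s
  proof -
    have zV: "y + s *\<^sub>R axis j 1 \<in> V" using line[OF s] .
    show "(f1 has_real_derivative g1 s) (at s)"
      unfolding f1_def g1_def by (rule shift_line_real, rule F1.f_deriv[OF zV])
    show "(f2 has_real_derivative g2 s) (at s)"
      unfolding f2_def g2_def by (rule shift_line_real, rule F2.f_deriv[OF zV])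
    show "(f3 has_real_derivative g3 s) (at s)"
      unfolding f3_def g3_def by (rule shift_line_real, rule F3.f_deriv[OF zV])
  qed
  have gb: "\<bar>g1 s\<bar> \<le> K * (\<bar>f1 s\<bar> + \<bar>f2 s\<bar> + \<bar>f3 s\<bar>)" "\<bar>g2 s\<bar> \<le> K * (\<bar>f1 s\<bar> + \<bar>f2 s\<bar> + \<bar>f3 s\<bar>)"
      "\<bar>g3 s\<bar> \<le> K * (\<bar>f1 s\<bar> + \<bar>f2 s\<bar> + \<bar>f3 s\<bar>)" if s: "s \<in> {a<..<b}" for s
  proof -
    have zV: "y + s *\<^sub>R axis j 1 \<in> V" using line[OF s] .
    note G = gbound[OF opV VU pr zV]
    have S0: "0 \<le> \<bar>f1 s\<bar> + \<bar>f2 s\<bar> + \<bar>f3 s\<bar>" by simp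
    have kk: "kap (y + s *\<^sub>R axis j 1) * (\<bar>f1 s\<bar> + \<bar>f2 s\<bar> + \<bar>f3 s\<bar>) \<le> K * (\<bar>f1 s\<bar> + \<bar>f2 s\<bar> + \<bar>f3 s\<bar>)"
      using K[OF zV] S0 by (rule mult_right_mono)
    show "\<bar>g1 s\<bar> \<le> K * (\<bar>f1 s\<bar> + \<bar>f2 s\<bar> + \<bar>f3 s\<bar>)"
      using component_le_norm_cart[of "Gv \<nu>1 (\<sigma> 0) (y + s *\<^sub>R axis j 1)" j] G(1) kk
      unfolding g1_def f1_def f2_def f3_def by linarith
    show "\<bar>g2 s\<bar> \<le> K * (\<bar>f1 s\<bar> + \<bar>f2 s\<bar> + \<bar>f3 s\<bar>)"
      using component_le_norm_cart[of "Gv \<nu>2 (\<sigma> 1) (y + s *\<^sub>R axis j 1)" j] G(2) kk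
      unfolding g2_def f1_def f2_def f3_def by linarith
    show "\<bar>g3 s\<bar> \<le> K * (\<bar>f1 s\<bar> + \<bar>f2 s\<bar> + \<bar>f3 s\<bar>)"
      using component_le_norm_cart[of "Gv \<nu>3 (\<sigma> 2) (y + s *\<^sub>R axis j 1)" j] G(3) kk
      unfolding g3_def f1_def f2_def f3_def by linarith
  qed
  define \<phi> where "\<phi> s = f1 s * f1 s + f2 s * f2 s + f3 s * f3 s" for s
  define \<phi>' where "\<phi>' s = 2 * f1 s * g1 s + 2 * f2 s * g2 s + 2 * f3 s * g3 s" for s
  have "\<phi> t = 0"
  proof (rule ode_zero[where \<phi>' = \<phi>' and L = "6 * K" , OF _ _ _ a0 _ t])
    fix s assume s: "s \<in> {a<..<b}"
    show "(\<phi> has_real_derivative \<phi>' s) (at s)"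
      unfolding \<phi>_def \<phi>'_def
      by (auto intro!: derivative_eq_intros df[OF s] simp: algebra_simps)
    show "\<bar>\<phi>' s\<bar> \<le> 6 * K * \<phi> s"
      using quad_bound[OF gb[OF s] K0] unfolding \<phi>'_def \<phi>_def by (simp add: power2_eq_square)
    show "0 \<le> \<phi> s" unfolding \<phi>_def by simp
  next
    show "\<phi> 0 = 0" unfolding \<phi>_def f1_def f2_def f3_def using z by simp
  qed
  then have h: "f1 t * f1 t + f2 t * f2 t + f3 t * f3 t = 0" unfolding \<phi>_def .
  have "0 \<le> f1 t * f1 t" "0 \<le> f2 t * f2 t" "0 \<le> f3 t * f3 t" by simp_all
  with h have "f1 t * f1 t = 0" "f2 t * f2 t = 0" "f3 t * f3 t = 0" by linarith+
  then have "f1 t = 0 \<and> f2 t = 0 \<and> f3 t = 0" by simp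
  then show ?thesis unfolding f1_def f2_def f3_def .
qed

end


lemma dep3:
  fixes E0 E1 E2 a :: "real^3"
  assumes a: "a \<noteq> 0" and h: "E0 \<bullet> a = 0" "E1 \<bullet> a = 0" "E2 \<bullet> a = 0"
  shows "\<exists>c::real^3. c \<noteq> 0 \<and> c$1 *\<^sub>R E0 + c$2 *\<^sub>R E1 + c$3 *\<^sub>R E2 = 0"
proof -
  define R where "R = (vector [E0, E1, E2] :: real^3^3)"
  have "R *v a = 0"
    using h unfolding R_def by (simp add: vec_eq_iff forall_3 matrix_vector_mult_def sum_3 inner_vec_def)
  then have "\<not> (\<exists>B. B ** R = mat 1)" using a matrix_left_invertible_ker by blast
  then have "det R = 0" using invertible_det_nz invertible_left_inverse by blast
  then have "det (transpose R) = 0" by (simp add: det_transpose)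
  then have "\<not> (\<exists>B. B ** transpose R = mat 1)" using invertible_det_nz invertible_left_inverse by blast
  then obtain c where c: "transpose R *v c = 0" "c \<noteq> 0" using matrix_left_invertible_ker by blast
  have "transpose R *v c = c$1 *\<^sub>R E0 + c$2 *\<^sub>R E1 + c$3 *\<^sub>R E2"
    unfolding R_def by (simp add: vec_eq_iff forall_3 matrix_vector_mult_def sum_3 transpose_def algebra_simps)
  then show ?thesis using c by auto
qed


lemma ab_prerel:
  assumes "abelian_relation V \<nu>1 \<nu>2 \<nu>3 v \<sigma>"
  shows "prerel V \<nu>1 \<nu>2 \<nu>3 v \<sigma>"
proof -
  have sm: "\<And>i. i < 4 \<Longrightarrow> smooth_on V (\<sigma> i) \<and> closed_form V (\<sigma> i)"
    using assms unfolding abelian_relation_def by blast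
  have dif: "\<And>i x j. i < 4 \<Longrightarrow> x \<in> V \<Longrightarrow> (\<lambda>t. \<sigma> i (x + t *\<^sub>R axis j 1)) differentiable (at 0)"
  proof -
    fix i x j assume "(i::nat) < 4" "x \<in> V"
    then show "(\<lambda>t. \<sigma> i (x + t *\<^sub>R axis j 1)) differentiable (at 0)"
      using sm[of i] unfolding smooth_on_def by (metis iter_pd.simps(1))
  qed
  have sv: "\<And>x. x \<in> V \<Longrightarrow> (\<sigma> 0 x + \<sigma> 1 x + \<sigma> 2 x) \<bullet> v x = 0"
  proof -
    fix x assume x: "x \<in> V"
    have "\<sigma> 0 x + \<sigma> 1 x + \<sigma> 2 x = - \<sigma> 3 x" using assms x unfolding abelian_relation_def
      by (metis add.commute add_eq_0_iff)
    moreover have "\<sigma> 3 x \<bullet> v x = 0" using assms x unfolding abelian_relation_def by blast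
    ultimately show "(\<sigma> 0 x + \<sigma> 1 x + \<sigma> 2 x) \<bullet> v x = 0" by simp
  qed
  show ?thesis unfolding prerel_def
    using assms sm dif sv unfolding abelian_relation_def by auto
qed

definition comb :: "real \<Rightarrow> real \<Rightarrow> real \<Rightarrow> (nat \<Rightarrow> real^3 \<Rightarrow> real^3) \<Rightarrow> (nat \<Rightarrow> real^3 \<Rightarrow> real^3) \<Rightarrow> (nat \<Rightarrow> real^3 \<Rightarrow> real^3) \<Rightarrow> nat \<Rightarrow> real^3 \<Rightarrow> real^3" where
  "comb c1 c2 c3 \<rho>0 \<rho>1 \<rho>2 = (\<lambda>i x. c1 *\<^sub>R \<rho>0 i x + c2 *\<^sub>R \<rho>1 i x + c3 *\<^sub>R \<rho>2 i x)"

lemma prerel_comb: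
  assumes p: "prerel V \<nu>1 \<nu>2 \<nu>3 v \<rho>0" "prerel V \<nu>1 \<nu>2 \<nu>3 v \<rho>1" "prerel V \<nu>1 \<nu>2 \<nu>3 v \<rho>2"
  shows "prerel V \<nu>1 \<nu>2 \<nu>3 v (comb c1 c2 c3 \<rho>0 \<rho>1 \<rho>2)"
proof -
  have der: "((\<lambda>t. \<rho> i (x + t *\<^sub>R axis j 1)) has_vector_derivative pdiff j (\<rho> i) x) (at 0)"
    if "prerel V \<nu>1 \<nu>2 \<nu>3 v \<rho>" "i < 3" "x \<in> V" for \<rho> i x j
    using that unfolding prerel_def pdiff_def by (simp add: vector_derivative_works[symmetric])
  have sc: "((\<lambda>t. c *\<^sub>R g t) has_vector_derivative c *\<^sub>R g') F" if "(g has_vector_derivative g') F"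
    for g :: "real \<Rightarrow> real^3" and g' F c
    using bounded_linear.has_vector_derivative[OF bounded_linear_scaleR_right that] .
  have D: "((\<lambda>t. comb c1 c2 c3 \<rho>0 \<rho>1 \<rho>2 i (x + t *\<^sub>R axis j 1)) has_vector_derivative
      c1 *\<^sub>R pdiff j (\<rho>0 i) x + c2 *\<^sub>R pdiff j (\<rho>1 i) x + c3 *\<^sub>R pdiff j (\<rho>2 i) x) (at 0)"
    if "i < 3" "x \<in> V" for i x j
    unfolding comb_def
    by (intro has_vector_derivative_add sc der p that)
  have pd: "pdiff j (comb c1 c2 c3 \<rho>0 \<rho>1 \<rho>2 i) x = c1 *\<^sub>R pdiff j (\<rho>0 i) x + c2 *\<^sub>R pdiff j (\<rho>1 i) x + c3 *\<^sub>R pdiff j (\<rho>2 i) x"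
    if "i < 3" "x \<in> V" for i x j
    unfolding pdiff_def[of j "comb c1 c2 c3 \<rho>0 \<rho>1 \<rho>2 i"] using D[OF that] by (rule vector_derivative_at)
  have cl: "closed_form V (\<rho> i)" if "prerel V \<nu>1 \<nu>2 \<nu>3 v \<rho>" "i < 3" for \<rho> i
    using that unfolding prerel_def by blast
  let ?s = "comb c1 c2 c3 \<rho>0 \<rho>1 \<rho>2"
  have P1: "\<forall>i<3. (\<forall>x\<in>V. \<forall>j. (\<lambda>t. ?s i (x + t *\<^sub>R axis j 1)) differentiable (at 0)) \<and> closed_form V (?s i)"
  proof (intro allI impI conjI)
    fix i :: nat assume i: "i < 3"
    show "\<forall>x\<in>V. \<forall>j. (\<lambda>t. ?s i (x + t *\<^sub>R axis j 1)) differentiable (at 0)"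
      using D[OF i] differentiableI_vector by blast
    show "closed_form V (?s i)"
      unfolding closed_form_def
    proof (intro ballI allI)
      fix x j k assume x: "x \<in> V"
      show "pdiff j (?s i) x $ k = pdiff k (?s i) x $ j"
        unfolding pd[OF i x] using cl[OF p(1) i] cl[OF p(2) i] cl[OF p(3) i] x
        unfolding closed_form_def by simp
    qed
  qed
  have P2: "\<forall>x\<in>V. \<forall>t. \<nu>1 x \<bullet> t = 0 \<longrightarrow> ?s 0 x \<bullet> t = 0"
    using p unfolding prerel_def comb_def by (simp add: inner_add_left)
  have P3: "\<forall>x\<in>V. \<forall>t. \<nu>2 x \<bullet> t = 0 \<longrightarrow> ?s 1 x \<bullet> t = 0"
    using p unfolding prerel_def comb_def by (simp add: inner_add_left)
  have P4: "\<forall>x\<in>V. \<forall>t. \<nu>3 x \<bullet> t = 0 \<longrightarrow> ?s 2 x \<bullet> t = 0"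
    using p unfolding prerel_def comb_def by (simp add: inner_add_left)
  have P5: "\<forall>x\<in>V. (?s 0 x + ?s 1 x + ?s 2 x) \<bullet> v x = 0"
  proof
    fix x assume x: "x \<in> V"
    have "(?s 0 x + ?s 1 x + ?s 2 x) \<bullet> v x
      = c1 * ((\<rho>0 0 x + \<rho>0 1 x + \<rho>0 2 x) \<bullet> v x) + c2 * ((\<rho>1 0 x + \<rho>1 1 x + \<rho>1 2 x) \<bullet> v x)
        + c3 * ((\<rho>2 0 x + \<rho>2 1 x + \<rho>2 2 x) \<bullet> v x)"
      unfolding comb_def by (simp add: inner_add_left algebra_simps)
    also have "\<dots> = 0" using p x unfolding prerel_def by simp
    finally show "(?s 0 x + ?s 1 x + ?s 2 x) \<bullet> v x = 0" .
  qed
  show ?thesis unfolding prerel_def using P1 P2 P3 P4 P5 by blast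
qed

lemma fco_comb: "fco \<nu> (comb c1 c2 c3 \<rho>0 \<rho>1 \<rho>2 i) x = c1 * fco \<nu> (\<rho>0 i) x + c2 * fco \<nu> (\<rho>1 i) x + c3 * fco \<nu> (\<rho>2 i) x"
  unfolding fco_def comb_def by (simp add: inner_add_left add_divide_distrib)



lemma axis_line_nth: "(q + t *\<^sub>R axis j (1::real) :: real^'n)$i = (if i = j then q$i + t else q$i)"
  by (simp add: axis_def)

context web begin

lemma box_step:
  assumes VU: "box lo hi \<subseteq> U" and pr: "prerel (box lo hi) \<nu>1 \<nu>2 \<nu>3 v \<sigma>"
    and K: "\<And>z. z \<in> box lo hi \<Longrightarrow> kap z \<le> K"
    and q: "q \<in> box lo hi" and qc: "q + c *\<^sub>R axis j 1 \<in> box lo hi"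
    and z: "fco \<nu>1 (\<sigma> 0) q = 0 \<and> fco \<nu>2 (\<sigma> 1) q = 0 \<and> fco \<nu>3 (\<sigma> 2) q = 0"
  shows "fco \<nu>1 (\<sigma> 0) (q + c *\<^sub>R axis j 1) = 0 \<and> fco \<nu>2 (\<sigma> 1) (q + c *\<^sub>R axis j 1) = 0
     \<and> fco \<nu>3 (\<sigma> 2) (q + c *\<^sub>R axis j 1) = 0"
proof (rule line_zero[OF open_box VU pr K _ _ _ _ _, where a = "lo$j - q$j" and b = "hi$j - q$j"])
  show "q + t *\<^sub>R axis j 1 \<in> box lo hi" if t: "t \<in> {lo $ j - q $ j<..<hi $ j - q $ j}" for t
    unfolding mem_box_cart
  proof
    fix i
    have "lo$i < q$i" "q$i < hi$i" using q mem_box_cart by blast+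
    then show "lo $ i < (q + t *\<^sub>R axis j 1) $ i \<and> (q + t *\<^sub>R axis j 1) $ i < hi $ i"
      using t by (cases "i = j") (auto simp: axis_def)
  qed
  have "lo$j < q$j" "q$j < hi$j" using q mem_box_cart by blast+
  then show "0 \<in> {lo $ j - q $ j<..<hi $ j - q $ j}" by simp
  have "lo$j < (q + c *\<^sub>R axis j 1)$j" "(q + c *\<^sub>R axis j 1)$j < hi$j" using qc mem_box_cart by blast+
  then show "c \<in> {lo $ j - q $ j<..<hi $ j - q $ j}" by (simp add: axis_line_nth)
qed (use z in auto)

lemma box_zero:
  assumes VU: "box lo hi \<subseteq> U" and pr: "prerel (box lo hi) \<nu>1 \<nu>2 \<nu>3 v \<sigma>"
    and K: "\<And>z. z \<in> box lo hi \<Longrightarrow> kap z \<le> K"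
    and p: "p \<in> box lo hi" and x: "x \<in> box lo hi"
    and z: "fco \<nu>1 (\<sigma> 0) p = 0 \<and> fco \<nu>2 (\<sigma> 1) p = 0 \<and> fco \<nu>3 (\<sigma> 2) p = 0"
  shows "fco \<nu>1 (\<sigma> 0) x = 0 \<and> fco \<nu>2 (\<sigma> 1) x = 0 \<and> fco \<nu>3 (\<sigma> 2) x = 0"
proof -
  define q1 where "q1 = p + (x$1 - p$1) *\<^sub>R axis 1 (1::real)"
  define q2 where "q2 = q1 + (x$2 - p$2) *\<^sub>R axis 2 (1::real)"
  have c1: "q1$i = (if i = 1 then x$i else p$i)" for i by (simp add: q1_def axis_def)
  have c2: "q2$i = (if i = 3 then p$i else x$i)" for i
    using exhaust_3[of i] by (auto simp: q2_def q1_def axis_def)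
  have pp: "lo$i < p$i \<and> p$i < hi$i" "lo$i < x$i \<and> x$i < hi$i" for i using p x mem_box_cart by blast+
  have q1: "q1 \<in> box lo hi" unfolding mem_box_cart c1 using pp by auto
  have q2: "q2 \<in> box lo hi" unfolding mem_box_cart c2 using pp by auto
  have xq: "x = q2 + (x$3 - p$3) *\<^sub>R axis 3 (1::real)"
    unfolding vec_eq_iff forall_3 using c2 by (simp add: axis_def)
  have z1: "fco \<nu>1 (\<sigma> 0) q1 = 0 \<and> fco \<nu>2 (\<sigma> 1) q1 = 0 \<and> fco \<nu>3 (\<sigma> 2) q1 = 0"
    using box_step[OF VU pr K p _ z] q1 unfolding q1_def by blast
  have z2: "fco \<nu>1 (\<sigma> 0) q2 = 0 \<and> fco \<nu>2 (\<sigma> 1) q2 = 0 \<and> fco \<nu>3 (\<sigma> 2) q2 = 0"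
    using box_step[OF VU pr K q1 _ z1] q2 unfolding q2_def by blast
  have xm: "q2 + (x$3 - p$3) *\<^sub>R axis 3 1 \<in> box lo hi" using x xq by simp
  have "fco \<nu>1 (\<sigma> 0) (q2 + (x$3 - p$3) *\<^sub>R axis 3 1) = 0 \<and> fco \<nu>2 (\<sigma> 1) (q2 + (x$3 - p$3) *\<^sub>R axis 3 1) = 0
     \<and> fco \<nu>3 (\<sigma> 2) (q2 + (x$3 - p$3) *\<^sub>R axis 3 1) = 0"
    by (rule box_step[OF VU pr K q2 xm z2])
  then show ?thesis using xq by simp
qed

end


context web begin

lemma kernel:
  assumes VU: "box lo hi \<subseteq> U" and pr: "prerel (box lo hi) \<nu>1 \<nu>2 \<nu>3 v \<sigma>"
    and K: "\<And>z. z \<in> box lo hi \<Longrightarrow> kap z \<le> K"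
    and p: "p \<in> box lo hi"
    and z: "fco \<nu>1 (\<sigma> 0) p = 0 \<and> fco \<nu>2 (\<sigma> 1) p = 0 \<and> fco \<nu>3 (\<sigma> 2) p = 0"
    and x: "x \<in> box lo hi"
  shows "\<sigma> 0 x = 0 \<and> \<sigma> 1 x = 0 \<and> \<sigma> 2 x = 0"
proof -
  interpret F1: fol U "box lo hi" \<nu>1 "\<sigma> 0" using fols[OF open_box VU pr] by blast
  interpret F2: fol U "box lo hi" \<nu>2 "\<sigma> 1" using fols[OF open_box VU pr] by blast
  interpret F3: fol U "box lo hi" \<nu>3 "\<sigma> 2" using fols[OF open_box VU pr] by blast
  have "fco \<nu>1 (\<sigma> 0) x = 0 \<and> fco \<nu>2 (\<sigma> 1) x = 0 \<and> fco \<nu>3 (\<sigma> 2) x = 0"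
    by (rule box_zero[OF VU pr K p x z])
  then show ?thesis using F1.tau_eq[OF x] F2.tau_eq[OF x] F3.tau_eq[OF x] by simp
qed

lemma fsum_zero:
  assumes VU: "box lo hi \<subseteq> U" and pr: "prerel (box lo hi) \<nu>1 \<nu>2 \<nu>3 v \<sigma>" and p: "p \<in> box lo hi"
  shows "vector [fco \<nu>1 (\<sigma> 0) p, fco \<nu>2 (\<sigma> 1) p, fco \<nu>3 (\<sigma> 2) p] \<bullet> (vector [\<nu>1 p \<bullet> v p, \<nu>2 p \<bullet> v p, \<nu>3 p \<bullet> v p] :: real^3) = 0"
proof -
  interpret F1: fol U "box lo hi" \<nu>1 "\<sigma> 0" using fols[OF open_box VU pr] by blast
  interpret F2: fol U "box lo hi" \<nu>2 "\<sigma> 1" using fols[OF open_box VU pr] by blast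
  interpret F3: fol U "box lo hi" \<nu>3 "\<sigma> 2" using fols[OF open_box VU pr] by blast
  have "(\<sigma> 0 p + \<sigma> 1 p + \<sigma> 2 p) \<bullet> v p = 0" using pr p unfolding prerel_def by blast
  then have "(fco \<nu>1 (\<sigma> 0) p *\<^sub>R \<nu>1 p + fco \<nu>2 (\<sigma> 1) p *\<^sub>R \<nu>2 p + fco \<nu>3 (\<sigma> 2) p *\<^sub>R \<nu>3 p) \<bullet> v p = 0"
    using F1.tau_eq[OF p] F2.tau_eq[OF p] F3.tau_eq[OF p] by simp
  then show ?thesis by (simp add: inner_vec_def sum_3 inner_add_left algebra_simps)
qed

end

lemma enat_le2: "k \<le> 2 \<Longrightarrow> enat k \<le> 2"
  by (simp add: numeral_eq_enat)



theorem theorem3: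
  fixes U :: "(real^3) set" and \<nu>1 \<nu>2 \<nu>3 v :: "real^3 \<Rightarrow> real^3"
  assumes "open U"
    and "surface_foliation U \<nu>1" and "surface_foliation U \<nu>2" and "surface_foliation U \<nu>3"
    and "curve_foliation U v"
    and "nondegenerate_web U \<nu>1 \<nu>2 \<nu>3 v"
  shows "\<forall>p\<in>U. \<exists>V. open V \<and> p \<in> V \<and> V \<subseteq> U \<and> web_rank V \<nu>1 \<nu>2 \<nu>3 v \<le> 2"
proof
  fix p assume pU: "p \<in> U"
  interpret W: web U \<nu>1 \<nu>2 \<nu>3 v using assms by (simp add: web_def)
  obtain r where r: "r > 0" "cball p r \<subseteq> U" using assms(1) pU open_contains_cball by blast
  define s where "s = r / 3"
  have sp: "s > 0" using r unfolding s_def by simp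
  define lo where "lo = p - (\<chi> i. s)"
  define hi where "hi = p + (\<chi> i. s)"
  have pV: "p \<in> box lo hi" by (simp add: mem_box_cart lo_def hi_def sp)
  have Vc: "box lo hi \<subseteq> cball p r"
  proof
    fix x assume x: "x \<in> box lo hi"
    have xi: "\<bar>(x - p)$i\<bar> < s" for i using x unfolding mem_box_cart lo_def hi_def
      by (auto simp: abs_less_iff) (smt (verit) vector_minus_component vec_lambda_beta vector_add_component)+
    have "norm (x - p) \<le> (\<Sum>i\<in>UNIV. \<bar>(x - p)$i\<bar>)" by (rule norm_le_l1_cart)
    also have "\<dots> = \<bar>(x - p)$1\<bar> + \<bar>(x - p)$2\<bar> + \<bar>(x - p)$3\<bar>" by (simp add: sum_3)
    also have "\<dots> < s + s + s" using xi[of 1] xi[of 2] xi[of 3] by linarith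
    also have "\<dots> = r" unfolding s_def by simp
    finally show "x \<in> cball p r" by (simp add: dist_norm norm_minus_commute)
  qed
  have VU: "box lo hi \<subseteq> U" using Vc r by blast
  have "compact (W.kap ` cball p r)"
    by (rule compact_continuous_image[OF continuous_on_subset[OF W.kap_cont r(2)] compact_cball])
  then obtain B where B: "\<And>y. y \<in> W.kap ` cball p r \<Longrightarrow> norm y \<le> B"
    using compact_imp_bounded bounded_iff by metis
  have K: "\<And>z. z \<in> box lo hi \<Longrightarrow> W.kap z \<le> B"
    using B Vc by fastforce
  have rank: "web_rank (box lo hi) \<nu>1 \<nu>2 \<nu>3 v \<le> 2"
    unfolding web_rank_def Sup_le_iff
  proof clarify
    fix k \<rho>
    assume rel: "\<forall>j<k. abelian_relation (box lo hi) \<nu>1 \<nu>2 \<nu>3 v (\<rho> j)"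
      and ind: "forms_lin_indep (box lo hi) k \<rho>"
    show "enat k \<le> 2"
    proof (rule ccontr)
      assume "\<not> enat k \<le> 2"
      then have k3: "3 \<le> k" by (simp add: numeral_eq_enat)
      have ab: "abelian_relation (box lo hi) \<nu>1 \<nu>2 \<nu>3 v (\<rho> j)" if "j < 3" for j
        using rel that k3 by auto
      have pr: "prerel (box lo hi) \<nu>1 \<nu>2 \<nu>3 v (\<rho> j)" if "j < 3" for j
        using ab_prerel[OF ab[OF that]] .
      define a :: "real^3" where "a = vector [\<nu>1 p \<bullet> v p, \<nu>2 p \<bullet> v p, \<nu>3 p \<bullet> v p]"
      have a0: "a \<noteq> 0"
      proof
        assume "a = 0"
        then have "a $ 1 = 0" by simp
        then show False using W.av(1)[OF pU] unfolding a_def by simp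
      qed
      define E where "E j = (vector [fco \<nu>1 (\<rho> j 0) p, fco \<nu>2 (\<rho> j 1) p, fco \<nu>3 (\<rho> j 2) p] :: real^3)" for j
      have Ea: "E j \<bullet> a = 0" if "j < 3" for j
        unfolding E_def a_def by (rule W.fsum_zero[OF VU pr[OF that] pV])
      obtain c :: "real^3" where c: "c \<noteq> 0" "c$1 *\<^sub>R E 0 + c$2 *\<^sub>R E 1 + c$3 *\<^sub>R E 2 = 0"
        using dep3[OF a0 Ea[of 0] Ea[of 1] Ea[of 2]] by auto
      define \<sigma> where "\<sigma> = comb (c$1) (c$2) (c$3) (\<rho> 0) (\<rho> 1) (\<rho> 2)"
      have prs: "prerel (box lo hi) \<nu>1 \<nu>2 \<nu>3 v \<sigma>"
        unfolding \<sigma>_def by (rule prerel_comb[OF pr pr pr]) auto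
      have cc: "(c$1 *\<^sub>R E 0 + c$2 *\<^sub>R E 1 + c$3 *\<^sub>R E 2) $ i = 0" for i using c(2) by simp
      have zp: "fco \<nu>1 (\<sigma> 0) p = 0 \<and> fco \<nu>2 (\<sigma> 1) p = 0 \<and> fco \<nu>3 (\<sigma> 2) p = 0"
        using cc[of 1] cc[of 2] cc[of 3] unfolding \<sigma>_def fco_comb E_def by (simp add: algebra_simps)
      have s012: "\<sigma> 0 x = 0 \<and> \<sigma> 1 x = 0 \<and> \<sigma> 2 x = 0" if x: "x \<in> box lo hi" for x
        by (rule W.kernel[OF VU prs K pV zp x])
      have s3: "\<sigma> 3 x = 0" if x: "x \<in> box lo hi" for x
      proof -
        have sum0: "\<rho> j 3 x = - (\<rho> j 0 x + \<rho> j 1 x + \<rho> j 2 x)" if "j < 3" for j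
          using ab[OF that] x unfolding abelian_relation_def
          by (metis add.commute add_eq_0_iff)
        have e: "\<rho> 0 3 x = - (\<rho> 0 0 x + \<rho> 0 1 x + \<rho> 0 2 x)" "\<rho> 1 3 x = - (\<rho> 1 0 x + \<rho> 1 1 x + \<rho> 1 2 x)"
          "\<rho> 2 3 x = - (\<rho> 2 0 x + \<rho> 2 1 x + \<rho> 2 2 x)" using sum0[of 0] sum0[of 1] sum0[of 2] by simp_all
        have "\<sigma> 3 x = - (\<sigma> 0 x + \<sigma> 1 x + \<sigma> 2 x)"
          unfolding \<sigma>_def comb_def e by (simp add: algebra_simps)
        then show ?thesis using s012[OF x] by simp
      qed
      define cc' where "cc' j = (if j = 0 then c$1 else if j = 1 then c$2 else if j = 2 then c$3 else 0)" for j :: nat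
      have sumeq: "(\<Sum>j<k. cc' j *\<^sub>R \<rho> j i x) = \<sigma> i x" for i x
      proof -
        have "(\<Sum>j<k. cc' j *\<^sub>R \<rho> j i x) = (\<Sum>j<3. cc' j *\<^sub>R \<rho> j i x)"
          by (rule sum.mono_neutral_right) (use k3 in \<open>auto simp: cc'_def\<close>)
        also have "\<dots> = \<sigma> i x"
        proof -
          have "{..<3::nat} = {0,1,2}" by auto
          then show ?thesis by (simp add: cc'_def \<sigma>_def comb_def)
        qed
        finally show ?thesis .
      qed
      have "\<forall>i<4. \<forall>x\<in>box lo hi. (\<Sum>j<k. cc' j *\<^sub>R \<rho> j i x) = 0"
      proof (intro allI impI ballI)
        fix i x assume i: "i < (4::nat)" and x: "x \<in> box lo hi"
        have "i = 0 \<or> i = 1 \<or> i = 2 \<or> i = 3" using i by auto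
        then show "(\<Sum>j<k. cc' j *\<^sub>R \<rho> j i x) = 0"
          unfolding sumeq using s012[OF x] s3[OF x] by auto
      qed
      then have "\<forall>j<k. cc' j = 0" using ind unfolding forms_lin_indep_def by blast
      then have "cc' 0 = 0" "cc' 1 = 0" "cc' 2 = 0" using k3 by auto
      then have "c = 0" unfolding cc'_def by (simp add: vec_eq_iff forall_3)
      then show False using c(1) by simp
    qed
  qed
  show "\<exists>V. open V \<and> p \<in> V \<and> V \<subseteq> U \<and> web_rank V \<nu>1 \<nu>2 \<nu>3 v \<le> 2"
    using open_box pV VU rank by blast
qed


end
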